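(* Let $n\ge 1$. (i) Let $p_0 > 1$ be such that $U(n,p_0) = 1$ (i.e. the identity matrix is optimal at $p_0$). Then for every $1 \le p < p_0$ we have $U(n,p)=1$, and every $n\times n$ real matrix $A$ whose rows are $\ell_p$-unit vectors and with $\mathrm{per}(A)=1$ has each row equal to $\pm$ a standard basis vector. (ii) Let $1\le p_0<\infty$ be such that $U(n,p_0) = n!/n^{n/p_0}$ (i.e. the matrix all of whose entries equal $n^{-1/p_0}$ is optimal at $p_0$). Then for every $p_0 < p < \infty$ we have $U(n,p) = n!/n^{n/p}$, and every $n\times n$ real matrix $A$ whose rows are $\ell_p$-unit vectors and with $\mathrm{per}(A) = n!/n^{n/p}$ has all entries of absolute value $n^{-1/p}$.
   Context: For $n\ge 1$ and $1 \le p \le \infty$, $U(n,p)$ denotes the maximum of $\mathrm{per}(A)=\sum_{\sigma\in S_n}\prod_{i=1}^n a_{i\sigma(i)}$ over all real $n\times n$ matrices $A$ each of whose rows has $\ell_p$-norm equal to $1$. *)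

theory Defs
  imports "HOL-Analysis.Analysis" "HOL-Library.Extended_Real" "HOL-Combinatorics.Permutations"
begin

text \<open>Rows/vectors of length n are functions nat => real, only indices < n matter.
  The exponent p ranges over [1, infinity], modelled as an extended real.\<close>

definition lpnorm :: "ereal \<Rightarrow> nat \<Rightarrow> (nat \<Rightarrow> real) \<Rightarrow> real" where
  "lpnorm p n x =
     (if p = \<infinity> then Max ((\<lambda>i. \<bar>x i\<bar>) ` {..<n})
      else (\<Sum>i<n. \<bar>x i\<bar> powr real_of_ereal p) powr (1 / real_of_ereal p))"

definition per :: "nat \<Rightarrow> (nat \<Rightarrow> nat \<Rightarrow> real) \<Rightarrow> real" where
  "per n A = (\<Sum>\<sigma> | \<sigma> permutes {..<n}. \<Prod>i<n. A i (\<sigma> i))"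

definition U :: "nat \<Rightarrow> ereal \<Rightarrow> real" where
  "U n p = Sup {per n A | A. \<forall>i<n. lpnorm p n (A i) = 1}"

end

theory Submission
  imports Defs
begin


lemma powr_tangent_strict:
  fixes r m y :: real
  assumes r: "r > 1" and m: "m > 0" and y: "y \<ge> 0" and ne: "y \<noteq> m"
  shows "y powr r > m powr r + r * m powr (r - 1) * (y - m)"
proof -
  have cont: "continuous_on {a..b} (\<lambda>x. x powr r)" if "0 \<le> a" for a b
    using that r by (intro continuous_on_powr') (auto simp: continuous_on_id continuous_on_const)
  have dif: "(\<lambda>x. x powr r) differentiable (at x)" if "x > 0" for x
    using has_real_derivative_powr[OF that] real_differentiable_def by blast
  show ?thesis
  proof (cases "y < m")
    case True
    obtain l z where z: "y < z" "z < m" "DERIV (\<lambda>x. x powr r) z :> l"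
      "m powr r - y powr r = (m - y) * l"
      using MVT[OF True cont[OF y]] dif y by force
    have "l = r * z powr (r - 1)"
      using DERIV_unique[OF z(3) has_real_derivative_powr] z y by auto
    moreover have "z powr (r - 1) < m powr (r - 1)"
      using powr_less_mono2[of "r-1" z m] r z y by auto
    ultimately have "m powr r - y powr r < (m - y) * (r * m powr (r - 1))"
      using z True r by (simp add: mult_strict_left_mono)
    then show ?thesis by (simp add: algebra_simps)
  next
    case False
    then have lt: "m < y" using ne by auto
    obtain l z where z: "m < z" "z < y" "DERIV (\<lambda>x. x powr r) z :> l"
      "y powr r - m powr r = (y - m) * l"
      using MVT[OF lt cont[of m y]] dif m by force
    have "l = r * z powr (r - 1)"
      using DERIV_unique[OF z(3) has_real_derivative_powr] z m by auto
    moreover have "z powr (r - 1) > m powr (r - 1)"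
      using powr_less_mono2[of "r-1" m z] r z m by auto
    ultimately have "y powr r - m powr r > (y - m) * (r * m powr (r - 1))"
      using z lt r by (simp add: mult_strict_left_mono)
    then show ?thesis by (simp add: algebra_simps)
  qed
qed

lemma powr_tangent:
  fixes r m y :: real
  assumes r: "r > 1" and m: "m > 0" and y: "y \<ge> 0"
  shows "y powr r \<ge> m powr r + r * m powr (r - 1) * (y - m)"
  using powr_tangent_strict[OF assms] by (cases "y = m") auto


lemma powr_one_iff:
  fixes S q :: real
  assumes "S \<ge> 0" "q > 0"
  shows "S powr (1/q) = 1 \<longleftrightarrow> S = 1"
proof
  assume "S powr (1/q) = 1"
  then have "(S powr (1/q)) powr q = 1" by simp
  then show "S = 1" using assms by (simp add: powr_powr)
qed simp

lemma lpnorm_fin_one: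
  fixes p :: real
  assumes "p > 0"
  shows "lpnorm (ereal p) n x = 1 \<longleftrightarrow> (\<Sum>i<n. \<bar>x i\<bar> powr p) = 1"
  unfolding lpnorm_def using powr_one_iff[of "\<Sum>i<n. \<bar>x i\<bar> powr p" p] assms
  by (simp add: sum_nonneg)

lemma power_mean_row:
  fixes p0 p :: real and x :: "nat \<Rightarrow> real"
  assumes p0: "1 \<le> p0" and pp: "p0 < p" and n: "n \<ge> 1"
    and sx: "(\<Sum>k<n. \<bar>x k\<bar> powr p) = 1"
  shows "(\<Sum>k<n. \<bar>x k\<bar> powr p0) powr (1/p0) \<le> real n powr (1/p0 - 1/p)"
    and "(\<Sum>k<n. \<bar>x k\<bar> powr p0) powr (1/p0) = real n powr (1/p0 - 1/p) \<Longrightarrow>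
           \<forall>k<n. \<bar>x k\<bar> = real n powr (- 1 / p)"
proof -
  define r where "r = p / p0"
  define y where "y k = \<bar>x k\<bar> powr p0" for k
  define m where "m = real n powr (- 1 / r)"
  have r: "r > 1" using p0 pp by (simp add: r_def)
  have np: "real n > 0" using n by simp
  have m: "m > 0" using np by (simp add: m_def)
  have y0: "y k \<ge> 0" for k by (simp add: y_def)
  have yr: "y k powr r = \<bar>x k\<bar> powr p" for k
    using p0 by (simp add: y_def r_def powr_powr)
  have mr: "m powr r = 1 / real n"
  proof -
    have "m powr r = real n powr (- (1/r) * r)" using np by (simp add: m_def powr_powr)
    also have "\<dots> = real n powr (- 1)" using r by simp
    also have "\<dots> = 1 / real n" using np by (simp add: powr_minus divide_inverse)
    finally show ?thesis .
  qed
  define c where "c = r * m powr (r - 1)"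
  have c: "c > 0" using r m by (simp add: c_def)
  define g where "g k = y k powr r - (m powr r + c * (y k - m))" for k
  have g0: "g k \<ge> 0" for k using powr_tangent[OF r m y0[of k]] by (simp add: g_def c_def)
  have sumg: "(\<Sum>k<n. g k) = - c * ((\<Sum>k<n. y k) - real n * m)"
  proof -
    have "(\<Sum>k<n. g k) = (\<Sum>k<n. y k powr r) - real n * m powr r - c * ((\<Sum>k<n. y k) - real n * m)"
      by (simp add: g_def sum_subtractf sum_distrib_left algebra_simps sum.distrib)
    also have "(\<Sum>k<n. y k powr r) = 1" using sx yr by simp
    finally show ?thesis using mr np by simp
  qed
  have Sle: "(\<Sum>k<n. y k) \<le> real n * m"
  proof -
    have "0 \<le> (\<Sum>k<n. g k)" by (rule sum_nonneg) (use g0 in auto)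
    then show ?thesis using sumg c by (simp add: mult_le_0_iff)
  qed
  have nm: "real n * m = real n powr (1 - p0 / p)"
  proof -
    have "m = real n powr (- (p0 / p))" using p0 by (simp add: m_def r_def)
    then have "real n * m = real n powr 1 * real n powr (- (p0 / p))" using np by simp
    also have "\<dots> = real n powr (1 + (- (p0 / p)))" by (rule powr_add[symmetric])
    also have "\<dots> = real n powr (1 - p0 / p)" by simp
    finally show ?thesis .
  qed
  have key: "(real n * m) powr (1/p0) = real n powr (1/p0 - 1/p)"
  proof -
    have "(real n * m) powr (1/p0) = real n powr ((1 - p0 / p) * (1/p0))"
      unfolding nm by (simp add: powr_powr)
    also have "(1 - p0 / p) * (1/p0) = 1/p0 - 1/p" using p0 pp by (simp add: field_simps)
    finally show ?thesis .
  qed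
  have S0: "(\<Sum>k<n. y k) \<ge> 0" by (rule sum_nonneg) (simp add: y0)
  show "(\<Sum>k<n. \<bar>x k\<bar> powr p0) powr (1/p0) \<le> real n powr (1/p0 - 1/p)"
    using powr_mono2[of "1/p0", OF _ S0 Sle] p0 key by (simp add: y_def)
  assume eq: "(\<Sum>k<n. \<bar>x k\<bar> powr p0) powr (1/p0) = real n powr (1/p0 - 1/p)"
  have "((\<Sum>k<n. y k) powr (1/p0)) powr p0 = ((real n * m) powr (1/p0)) powr p0"
    using eq key by (simp add: y_def)
  then have Seq: "(\<Sum>k<n. y k) = real n * m"
    using S0 m np p0 by (simp add: powr_powr)
  then have "(\<Sum>k<n. g k) = 0" using sumg by simp
  then have gz: "\<forall>k<n. g k = 0" using g0 by (simp add: sum_nonneg_eq_0_iff)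
  show "\<forall>k<n. \<bar>x k\<bar> = real n powr (- 1 / p)"
  proof (intro allI impI)
    fix k assume "k < n"
    then have "g k = 0" using gz by simp
    then have ykm: "y k = m"
      using powr_tangent_strict[OF r m y0[of k]] by (auto simp: g_def c_def)
    have "\<bar>x k\<bar> = (y k) powr (1/p0)" using p0 by (simp add: y_def powr_powr)
    also have "\<dots> = real n powr (- 1 / p)"
      using ykm np p0 by (simp add: m_def r_def powr_powr)
    finally show "\<bar>x k\<bar> = real n powr (- 1 / p)" .
  qed
qed




definition okq :: "ereal \<Rightarrow> bool" where
  "okq q \<longleftrightarrow> q = \<infinity> \<or> (\<exists>r. q = ereal r \<and> r > 0)"

lemma row_entry_le1:
  assumes "okq q" "lpnorm q n x = 1" "j < n"
  shows "\<bar>x j\<bar> \<le> 1"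
proof (cases "q = \<infinity>")
  case True
  then have "Max ((\<lambda>i. \<bar>x i\<bar>) ` {..<n}) = 1" using assms by (simp add: lpnorm_def)
  moreover have "\<bar>x j\<bar> \<le> Max ((\<lambda>i. \<bar>x i\<bar>) ` {..<n})" using assms(3) by (intro Max_ge) auto
  ultimately show ?thesis by simp
next
  case False
  then obtain r where r: "q = ereal r" "r > 0" using assms(1) by (auto simp: okq_def)
  then have S: "(\<Sum>i<n. \<bar>x i\<bar> powr r) = 1" using assms lpnorm_fin_one by blast
  have "\<bar>x j\<bar> powr r \<le> (\<Sum>i<n. \<bar>x i\<bar> powr r)"
    using assms(3) by (intro member_le_sum) auto
  then have le: "\<bar>x j\<bar> powr r \<le> 1" using S by simp
  show ?thesis
  proof (rule ccontr)
    assume "\<not> \<bar>x j\<bar> \<le> 1"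
    then have "1 powr r < \<bar>x j\<bar> powr r" using r by (intro powr_less_mono2) auto
    then show False using le by simp
  qed
qed

lemma per_le_fact:
  assumes "\<forall>i<n. \<forall>j<n. \<bar>A i j\<bar> \<le> 1"
  shows "per n A \<le> fact n"
proof -
  have "per n A \<le> (\<Sum>\<sigma> | \<sigma> permutes {..<n}. (1::real))"
    unfolding per_def
  proof (rule sum_mono)
    fix \<sigma> assume "\<sigma> \<in> {\<sigma>. \<sigma> permutes {..<n}}"
    then have s: "\<And>i. i < n \<Longrightarrow> \<sigma> i < n" using permutes_in_image by fastforce
    have "(\<Prod>i<n. A i (\<sigma> i)) \<le> \<bar>\<Prod>i<n. A i (\<sigma> i)\<bar>" by simp
    also have "\<dots> = (\<Prod>i<n. \<bar>A i (\<sigma> i)\<bar>)" by (simp add: abs_prod)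
    also have "\<dots> \<le> 1" using assms s by (intro prod_le_1) auto
    finally show "(\<Prod>i<n. A i (\<sigma> i)) \<le> 1" .
  qed
  also have "\<dots> = fact n" using card_permutations[of "{..<n}" n] by simp
  finally show ?thesis .
qed

lemma bdd_U:
  assumes "okq q"
  shows "bdd_above {per n A | A. \<forall>i<n. lpnorm q n (A i) = 1}"
  unfolding bdd_above_def
  using assms row_entry_le1 per_le_fact by blast

lemma per_le_U:
  assumes "okq q" "\<forall>i<n. lpnorm q n (B i) = 1"
  shows "per n B \<le> U n q"
  unfolding U_def using assms by (intro cSup_upper[OF _ bdd_U]) auto

lemma per_scale:
  "per n (\<lambda>i k. c i * B i k) = (\<Prod>i<n. c i) * per n B"
  unfolding per_def by (simp add: prod.distrib sum_distrib_left)

lemma lpnorm_div: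
  assumes "okq q" "c > 0" "n \<ge> 1"
  shows "lpnorm q n (\<lambda>k. x k / c) = lpnorm q n x / c"
proof (cases "q = \<infinity>")
  case True
  have "Max ((\<lambda>i. \<bar>x i / c\<bar>) ` {..<n}) = Max ((\<lambda>t. t / c) ` ((\<lambda>i. \<bar>x i\<bar>) ` {..<n}))"
    using assms by (simp add: image_image)
  also have "\<dots> = Max ((\<lambda>i. \<bar>x i\<bar>) ` {..<n}) / c"
    using assms by (intro mono_Max_commute[symmetric]) (auto simp: mono_def divide_right_mono lessThan_empty_iff)
  finally show ?thesis using True by (simp add: lpnorm_def)
next
  case False
  then obtain r where r: "q = ereal r" "r > 0" using assms(1) by (auto simp: okq_def)
  have "(\<Sum>i<n. \<bar>x i / c\<bar> powr r) = (\<Sum>i<n. \<bar>x i\<bar> powr r) / c powr r"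
    using assms by (simp add: powr_divide sum_divide_distrib)
  moreover have "((\<Sum>i<n. \<bar>x i\<bar> powr r) / c powr r) powr (1/r) = (\<Sum>i<n. \<bar>x i\<bar> powr r) powr (1/r) / c"
    using assms r by (simp add: powr_divide sum_nonneg powr_powr)
  ultimately show ?thesis using r by (simp add: lpnorm_def)
qed

lemma lpnorm_pos:
  assumes "okq q" "p > 0" "lpnorm (ereal p) n x = 1"
  shows "lpnorm q n x > 0"
proof -
  have S: "(\<Sum>i<n. \<bar>x i\<bar> powr p) = 1" using assms lpnorm_fin_one by blast
  obtain j where j: "j < n" "x j \<noteq> 0"
  proof (rule ccontr)
    assume "\<not> thesis"
    then have "\<forall>j<n. x j = 0" using that by blast
    then show False using S by simp
  qed
  show ?thesis
  proof (cases "q = \<infinity>")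
    case True
    have "\<bar>x j\<bar> \<le> Max ((\<lambda>i. \<bar>x i\<bar>) ` {..<n})" using j by (intro Max_ge) auto
    moreover have "\<bar>x j\<bar> > 0" using j by simp
    ultimately have "0 < Max ((\<lambda>i. \<bar>x i\<bar>) ` {..<n})" by linarith
    then show ?thesis using True by (simp add: lpnorm_def)
  next
    case False
    then obtain r where r: "q = ereal r" "r > 0" using assms(1) by (auto simp: okq_def)
    have "\<bar>x j\<bar> powr r \<le> (\<Sum>i<n. \<bar>x i\<bar> powr r)"
      using j by (intro member_le_sum) auto
    moreover have "\<bar>x j\<bar> powr r > 0" using j by simp
    ultimately have "(\<Sum>i<n. \<bar>x i\<bar> powr r) > 0" by linarith
    then show ?thesis using r by (simp add: lpnorm_def)
  qed
qed

lemma main_bound: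
  assumes "okq q" "p > 0" "n \<ge> 1" "\<forall>i<n. lpnorm (ereal p) n (A i) = 1"
  shows "per n A \<le> U n q * (\<Prod>i<n. lpnorm q n (A i))"
proof -
  define c where "c i = (if i < n then lpnorm q n (A i) else 1)" for i
  have c: "c i > 0" for i using lpnorm_pos[OF assms(1,2)] assms(4) by (simp add: c_def)
  define B where "B i k = A i k / c i" for i k
  have AB: "A = (\<lambda>i k. c i * B i k)" using c by (auto simp: B_def intro!: ext) (metis less_irrefl)
  have Bn: "\<forall>i<n. lpnorm q n (B i) = 1"
  proof (intro allI impI)
    fix i assume i: "i < n"
    have "lpnorm q n (B i) = lpnorm q n (A i) / c i"
      unfolding B_def by (rule lpnorm_div[OF assms(1) c assms(3)])
    also have "\<dots> = 1" using i c[of i] by (simp add: c_def)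
    finally show "lpnorm q n (B i) = 1" .
  qed
  have "per n A = (\<Prod>i<n. c i) * per n B" by (subst AB) (rule per_scale)
  also have "\<dots> \<le> (\<Prod>i<n. c i) * U n q"
    using per_le_U[OF assms(1) Bn] c by (intro mult_left_mono prod_nonneg) (auto intro: less_imp_le)
  also have "(\<Prod>i<n. c i) = (\<Prod>i<n. lpnorm q n (A i))" by (simp add: c_def)
  finally show ?thesis by (simp add: mult.commute)
qed

lemma prod_eq_max:
  fixes c :: "nat \<Rightarrow> real"
  assumes "\<forall>i<n. 0 < c i \<and> c i \<le> m" "(\<Prod>i<n. c i) \<ge> m ^ n"
  shows "\<forall>i<n. c i = m"
proof (rule ccontr)
  assume "\<not> ?thesis"
  then obtain j where j: "j < n" "c j < m" using assms(1) by force
  have m: "m > 0" using assms(1) j by force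
  have "(\<Prod>i<n. c i) = c j * (\<Prod>i\<in>{..<n} - {j}. c i)"
    using j by (simp add: prod.remove)
  also have "(\<Prod>i\<in>{..<n} - {j}. c i) \<le> (\<Prod>i\<in>{..<n} - {j}. m)"
    using assms(1) by (intro prod_mono) auto
  also have "(\<Prod>i\<in>{..<n} - {j}. m) = m ^ (n - 1)" using j by simp
  finally have "(\<Prod>i<n. c i) \<le> c j * m ^ (n - 1)" using assms(1) j by (simp add: mult_left_mono)
  also have "\<dots> < m * m ^ (n - 1)" using j m by simp
  also have "\<dots> = m ^ n" using j by (cases n) auto
  finally show False using assms(2) by simp
qed




lemma single_support:
  fixes x :: "nat \<Rightarrow> real"
  assumes p: "p > 0" and S: "(\<Sum>k<n. \<bar>x k\<bar> powr p) = 1" and j: "j < n" "\<bar>x j\<bar> = 1"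
  shows "\<forall>k<n. k \<noteq> j \<longrightarrow> x k = 0"
proof -
  have "(\<Sum>k<n. \<bar>x k\<bar> powr p) = \<bar>x j\<bar> powr p + (\<Sum>k\<in>{..<n} - {j}. \<bar>x k\<bar> powr p)"
    using j by (intro sum.remove) auto
  then have "(\<Sum>k\<in>{..<n} - {j}. \<bar>x k\<bar> powr p) = 0" using S j by simp
  then have "\<forall>k\<in>{..<n} - {j}. \<bar>x k\<bar> powr p = 0"
    by (subst (asm) sum_nonneg_eq_0_iff) auto
  then show ?thesis by auto
qed

lemma part1_row:
  assumes p: "1 \<le> p" and q: "ereal p < q" and x: "lpnorm (ereal p) n x = 1"
  shows "lpnorm q n x \<le> 1"
    and "lpnorm q n x = 1 \<Longrightarrow> \<exists>j<n. \<bar>x j\<bar> = 1 \<and> (\<forall>k<n. k \<noteq> j \<longrightarrow> x k = 0)"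
proof -
  have okp: "okq (ereal p)" using p by (simp add: okq_def)
  have S: "(\<Sum>i<n. \<bar>x i\<bar> powr p) = 1" using x p lpnorm_fin_one by simp
  have le1: "\<And>j. j < n \<Longrightarrow> \<bar>x j\<bar> \<le> 1" using row_entry_le1[OF okp x] by blast
  have n: "n \<noteq> 0" proof
    assume "n = 0" then show False using S by simp
  qed
  have "lpnorm q n x \<le> 1 \<and> (lpnorm q n x = 1 \<longrightarrow> (\<exists>j<n. \<bar>x j\<bar> = 1 \<and> (\<forall>k<n. k \<noteq> j \<longrightarrow> x k = 0)))"
  proof (cases q)
    case (real r)
    have rp: "r > p" using q real by simp
    have le: "(\<Sum>i<n. \<bar>x i\<bar> powr r) \<le> (\<Sum>i<n. \<bar>x i\<bar> powr p)"
      using le1 rp by (intro sum_mono powr_mono') auto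
    have S0: "(\<Sum>i<n. \<bar>x i\<bar> powr r) \<ge> 0" by (simp add: sum_nonneg)
    have L: "lpnorm q n x = (\<Sum>i<n. \<bar>x i\<bar> powr r) powr (1/r)" using real by (simp add: lpnorm_def)
    have A: "lpnorm q n x \<le> 1" unfolding L using le S S0 rp p by (intro powr_le1) auto
    have B: "\<exists>j<n. \<bar>x j\<bar> = 1 \<and> (\<forall>k<n. k \<noteq> j \<longrightarrow> x k = 0)" if eq: "lpnorm q n x = 1"
    proof -
      have Sr: "(\<Sum>i<n. \<bar>x i\<bar> powr r) = 1" using eq L powr_one_iff[OF S0, of r] rp p by simp
      have "(\<Sum>i<n. \<bar>x i\<bar> powr p - \<bar>x i\<bar> powr r) = 0" using S Sr by (simp add: sum_subtractf)
      then have eqs: "\<forall>i<n. \<bar>x i\<bar> powr p - \<bar>x i\<bar> powr r = 0"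
        using le1 rp by (subst (asm) sum_nonneg_eq_0_iff) (auto intro: powr_mono')
      obtain j where j: "j < n" "x j \<noteq> 0"
      proof (rule ccontr)
        assume "\<not> thesis"
        then have "\<forall>j<n. x j = 0" using that by blast
        then show False using S by simp
      qed
      have xj1: "\<bar>x j\<bar> = 1"
      proof (rule ccontr)
        assume "\<bar>x j\<bar> \<noteq> 1"
        then have a1: "\<bar>x j\<bar> < 1" using le1 j by force
        have "\<bar>x j\<bar> powr (r - p) < 1 powr (r - p)"
          using a1 rp by (intro powr_less_mono2) auto
        then have lt: "\<bar>x j\<bar> powr (r - p) < 1" by simp
        have "\<bar>x j\<bar> powr r = \<bar>x j\<bar> powr p * \<bar>x j\<bar> powr (r - p)"
          by (simp add: powr_add[symmetric])
        also have "\<dots> < \<bar>x j\<bar> powr p" using lt j by simp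
        finally show False using eqs j by simp
      qed
      show ?thesis using single_support[OF _ S j(1) xj1] p j xj1 by auto
    qed
    show ?thesis using A B by blast
  next
    case PInf
    have L: "lpnorm q n x = Max ((\<lambda>i. \<bar>x i\<bar>) ` {..<n})" using PInf by (simp add: lpnorm_def)
    have A: "lpnorm q n x \<le> 1" unfolding L using le1 n by (subst Max_le_iff) auto
    have B: "\<exists>j<n. \<bar>x j\<bar> = 1 \<and> (\<forall>k<n. k \<noteq> j \<longrightarrow> x k = 0)" if eq: "lpnorm q n x = 1"
    proof -
      have "Max ((\<lambda>i. \<bar>x i\<bar>) ` {..<n}) \<in> (\<lambda>i. \<bar>x i\<bar>) ` {..<n}" using n by (intro Max_in) auto
      then obtain j where j: "j < n" "\<bar>x j\<bar> = 1" using eq L by auto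
      show ?thesis using single_support[OF _ S j] p j by auto
    qed
    show ?thesis using A B by blast
  next
    case MInf
    then show ?thesis using q by simp
  qed
  then show "lpnorm q n x \<le> 1"
    and "lpnorm q n x = 1 \<Longrightarrow> \<exists>j<n. \<bar>x j\<bar> = 1 \<and> (\<forall>k<n. k \<noteq> j \<longrightarrow> x k = 0)" by auto
qed




lemma per_id: "per n (\<lambda>i k. if i = k then 1 else 0) = 1"
proof -
  let ?P = "{\<sigma>. \<sigma> permutes {..<n}}"
  have fin: "finite ?P" by (simp add: finite_permutations)
  have idP: "id \<in> ?P" by (simp add: permutes_id)
  have z: "(\<Prod>i<n. (if i = \<sigma> i then 1 else 0 :: real)) = 0" if "\<sigma> \<in> ?P - {id}" for \<sigma>
  proof -
    from that have s: "\<sigma> permutes {..<n}" "\<sigma> \<noteq> id" by auto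
    then obtain i where i: "\<sigma> i \<noteq> i" by (metis eq_id_iff)
    then have "i < n" using s(1) unfolding permutes_def by auto
    then have "\<exists>a\<in>{..<n}. (if a = \<sigma> a then 1 else 0 :: real) = 0" using i by (intro bexI[of _ i]) auto
    then show ?thesis by (intro prod_zero) auto
  qed
  have "per n (\<lambda>i k. if i = k then 1 else 0) = (\<Sum>\<sigma>\<in>?P. \<Prod>i<n. (if i = \<sigma> i then 1 else 0 :: real))"
    by (simp add: per_def)
  also have "\<dots> = (\<Prod>i<n. (if i = id i then 1 else 0 :: real)) + (\<Sum>\<sigma>\<in>?P - {id}. \<Prod>i<n. (if i = \<sigma> i then 1 else 0 :: real))"
    using fin idP by (rule sum.remove)
  also have "(\<Sum>\<sigma>\<in>?P - {id}. \<Prod>i<n. (if i = \<sigma> i then 1 else 0 :: real)) = 0"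
    by (rule sum.neutral) (use z in blast)
  finally show ?thesis by simp
qed

lemma lpnorm_id_row:
  assumes "p > 0" "i < n"
  shows "lpnorm (ereal p) n (\<lambda>k. if i = k then 1 else 0) = 1"
proof -
  have "(\<Sum>k<n. \<bar>if i = k then 1 else 0 :: real\<bar> powr p) = (\<Sum>k<n. if i = k then 1 else 0)"
    by (intro sum.cong) auto
  also have "\<dots> = 1" using assms by simp
  finally show ?thesis using assms lpnorm_fin_one by blast
qed

lemma per_const: "per n (\<lambda>i k. a) = fact n * a ^ n"
  using card_permutations[of "{..<n}" n] by (simp add: per_def)

lemma const_facts:
  fixes p :: real
  assumes "p > 0" "n \<ge> 1"
  shows "lpnorm (ereal p) n (\<lambda>k. real n powr (- 1 / p)) = 1"
    and "per n (\<lambda>i k. real n powr (- 1 / p)) = fact n / real n powr (real n / p)"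
proof -
  have np: "real n > 0" using assms by simp
  have "(\<Sum>k<n. \<bar>real n powr (- 1 / p)\<bar> powr p) = real n * real n powr (- 1)"
    using assms by (simp add: powr_powr)
  also have "\<dots> = 1" using np by (simp add: powr_minus)
  finally show "lpnorm (ereal p) n (\<lambda>k. real n powr (- 1 / p)) = 1"
    using assms lpnorm_fin_one by blast
  have "(real n powr (- 1 / p)) ^ n = real n powr (real n * (- 1 / p))"
    using np by (simp add: powr_power)
  also have "\<dots> = inverse (real n powr (real n / p))"
    by (simp add: powr_minus[symmetric])
  finally show "per n (\<lambda>i k. real n powr (- 1 / p)) = fact n / real n powr (real n / p)"
    by (simp add: per_const divide_inverse)
qed




theorem lemma1p2:
  fixes n :: nat
  assumes "n \<ge> 1"
  shows
   "(\<forall>p0::ereal. p0 > 1 \<and> U n p0 = 1 \<longrightarrow>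
      (\<forall>p::real. 1 \<le> p \<and> ereal p < p0 \<longrightarrow>
         U n (ereal p) = 1 \<and>
         (\<forall>A. (\<forall>i<n. lpnorm (ereal p) n (A i) = 1) \<and> per n A = 1 \<longrightarrow>
              (\<forall>i<n. \<exists>j<n. \<exists>s\<in>{1, -1::real}. \<forall>k<n. A i k = (if k = j then s else 0)))))
    \<and>
    (\<forall>p0::real. 1 \<le> p0 \<and> U n (ereal p0) = fact n / real n powr (real n / p0) \<longrightarrow>
      (\<forall>p::real. p0 < p \<longrightarrow>
         U n (ereal p) = fact n / real n powr (real n / p) \<and>
         (\<forall>A. (\<forall>i<n. lpnorm (ereal p) n (A i) = 1) \<and> per n A = fact n / real n powr (real n / p) \<longrightarrow>
              (\<forall>i<n. \<forall>j<n. \<bar>A i j\<bar> = real n powr (- 1 / p)))))"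
proof (rule conjI; intro allI impI; elim conjE)
  fix p0 :: ereal and p :: real
  assume p0: "p0 > 1" "U n p0 = 1" and p: "1 \<le> p" "ereal p < p0"
  have okq: "okq p0" using p0(1) by (cases p0) (auto simp: okq_def)
  have bound: "per n A \<le> (\<Prod>i<n. lpnorm p0 n (A i))" and
       c01: "\<forall>i<n. 0 < lpnorm p0 n (A i) \<and> lpnorm p0 n (A i) \<le> 1"
    if A: "\<forall>i<n. lpnorm (ereal p) n (A i) = 1" for A
  proof -
    show "per n A \<le> (\<Prod>i<n. lpnorm p0 n (A i))"
      using main_bound[OF okq _ assms A] p p0 by simp
    show "\<forall>i<n. 0 < lpnorm p0 n (A i) \<and> lpnorm p0 n (A i) \<le> 1"
      using lpnorm_pos[OF okq, of p] part1_row(1)[OF p(1) p(2)] A p(1) by force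
  qed
  have "U n (ereal p) = 1"
    unfolding U_def
  proof (rule cSup_eq_maximum)
    show "1 \<in> {per n A |A. \<forall>i<n. lpnorm (ereal p) n (A i) = 1}"
      using per_id lpnorm_id_row p by (intro CollectI exI[of _ "\<lambda>i k. if i = k then 1 else 0"]) auto
    fix x assume "x \<in> {per n A |A. \<forall>i<n. lpnorm (ereal p) n (A i) = 1}"
    then obtain A where A: "\<forall>i<n. lpnorm (ereal p) n (A i) = 1" "x = per n A" by auto
    have "(\<Prod>i<n. lpnorm p0 n (A i)) \<le> 1"
      using c01[OF A(1)] by (intro prod_le_1) (auto intro: less_imp_le)
    then show "x \<le> 1" using bound[OF A(1)] A(2) by simp
  qed
  moreover have "\<forall>A. (\<forall>i<n. lpnorm (ereal p) n (A i) = 1) \<and> per n A = 1 \<longrightarrow>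
              (\<forall>i<n. \<exists>j<n. \<exists>s\<in>{1, -1::real}. \<forall>k<n. A i k = (if k = j then s else 0))"
  proof (rule allI, rule impI, elim conjE)
  fix A assume A: "\<forall>i<n. lpnorm (ereal p) n (A i) = 1" "per n A = 1"
  have "(\<Prod>i<n. lpnorm p0 n (A i)) \<ge> 1 ^ n" using bound[OF A(1)] A(2) by simp
  then have all1: "\<forall>i<n. lpnorm p0 n (A i) = 1" using prod_eq_max[OF c01[OF A(1)]] by blast
  show "\<forall>i<n. \<exists>j<n. \<exists>s\<in>{1, -1::real}. \<forall>k<n. A i k = (if k = j then s else 0)"
  proof (intro allI impI)
    fix i assume i: "i < n"
    obtain j where j: "j < n" "\<bar>A i j\<bar> = 1" "\<forall>k<n. k \<noteq> j \<longrightarrow> A i k = 0"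
      using part1_row(2)[OF p(1) p(2)] A(1) all1 i by blast
    have "A i j \<in> {1, -1}" using j(2) by (auto simp: abs_if split: if_splits)
    then show "\<exists>j<n. \<exists>s\<in>{1, -1::real}. \<forall>k<n. A i k = (if k = j then s else 0)"
      using j by (intro exI[of _ j] conjI bexI[of _ "A i j"]) auto
  qed
  qed
  ultimately show "U n (ereal p) = 1 \<and> (\<forall>A. (\<forall>i<n. lpnorm (ereal p) n (A i) = 1) \<and> per n A = 1 \<longrightarrow>
              (\<forall>i<n. \<exists>j<n. \<exists>s\<in>{1, -1::real}. \<forall>k<n. A i k = (if k = j then s else 0)))" by blast
next
  fix p0 p :: real
  assume p0: "1 \<le> p0" "U n (ereal p0) = fact n / real n powr (real n / p0)" and pp: "p0 < p"
  have okq: "okq (ereal p0)" using p0 by (auto simp: okq_def)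
  have np: "real n > 0" using assms by simp
  define K0 where "K0 = fact n / real n powr (real n / p0)"
  have K0: "K0 > 0" using np by (simp add: K0_def)
  define m where "m = real n powr (1/p0 - 1/p)"
  have m: "m > 0" using np by (simp add: m_def)
  have Km: "K0 * m ^ n = fact n / real n powr (real n / p)"
  proof -
    have "m ^ n = real n powr (real n * (1/p0 - 1/p))" using np by (simp add: m_def powr_power)
    also have "real n * (1/p0 - 1/p) = real n / p0 - real n / p" by (simp add: algebra_simps)
    also have "real n powr (real n / p0 - real n / p) = real n powr (real n / p0) / real n powr (real n / p)"
      by (rule powr_diff)
    finally show ?thesis using np by (simp add: K0_def)
  qed
  have rowc: "\<forall>i<n. 0 < lpnorm (ereal p0) n (A i) \<and> lpnorm (ereal p0) n (A i) \<le> m"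
    and bound: "per n A \<le> K0 * (\<Prod>i<n. lpnorm (ereal p0) n (A i))"
    if A: "\<forall>i<n. lpnorm (ereal p) n (A i) = 1" for A
  proof -
    show "per n A \<le> K0 * (\<Prod>i<n. lpnorm (ereal p0) n (A i))"
      using main_bound[OF okq _ assms A] p0 pp by (simp add: K0_def)
    show "\<forall>i<n. 0 < lpnorm (ereal p0) n (A i) \<and> lpnorm (ereal p0) n (A i) \<le> m"
    proof (intro allI impI conjI)
      fix i assume i: "i < n"
      have "p > 0" using p0 pp by simp
      then show "0 < lpnorm (ereal p0) n (A i)" using lpnorm_pos[OF okq, of p n "A i"] A i by blast
      have S: "(\<Sum>k<n. \<bar>A i k\<bar> powr p) = 1" using A i p0 pp lpnorm_fin_one by auto
      show "lpnorm (ereal p0) n (A i) \<le> m"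
        using power_mean_row(1)[OF p0(1) pp assms S] by (simp add: lpnorm_def m_def)
    qed
  qed
  have ub: "per n A \<le> K0 * m ^ n" if A: "\<forall>i<n. lpnorm (ereal p) n (A i) = 1" for A
  proof -
    have "(\<Prod>i<n. lpnorm (ereal p0) n (A i)) \<le> (\<Prod>i<n. m)"
      using rowc[OF A] by (intro prod_mono) (auto intro: less_imp_le)
    then have "K0 * (\<Prod>i<n. lpnorm (ereal p0) n (A i)) \<le> K0 * m ^ n" using K0 by simp
    then show ?thesis using bound[OF A] by simp
  qed
  have "U n (ereal p) = fact n / real n powr (real n / p)"
    unfolding U_def
  proof (rule cSup_eq_maximum)
    show "fact n / real n powr (real n / p) \<in> {per n A |A. \<forall>i<n. lpnorm (ereal p) n (A i) = 1}"
      using const_facts[of p n] assms p0 pp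
      by (intro CollectI exI[of _ "\<lambda>i k. real n powr (- 1 / p)"]) auto
    fix x assume "x \<in> {per n A |A. \<forall>i<n. lpnorm (ereal p) n (A i) = 1}"
    then obtain A where A: "\<forall>i<n. lpnorm (ereal p) n (A i) = 1" "x = per n A" by auto
    then show "x \<le> fact n / real n powr (real n / p)" using ub[OF A(1)] Km by simp
  qed
  moreover have "\<forall>A. (\<forall>i<n. lpnorm (ereal p) n (A i) = 1) \<and> per n A = fact n / real n powr (real n / p) \<longrightarrow>
              (\<forall>i<n. \<forall>j<n. \<bar>A i j\<bar> = real n powr (- 1 / p))"
  proof (rule allI, rule impI, elim conjE)
  fix A assume A: "\<forall>i<n. lpnorm (ereal p) n (A i) = 1"
    "per n A = fact n / real n powr (real n / p)"
  have "K0 * m ^ n \<le> K0 * (\<Prod>i<n. lpnorm (ereal p0) n (A i))" using bound[OF A(1)] A(2) Km by simp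
  then have "m ^ n \<le> (\<Prod>i<n. lpnorm (ereal p0) n (A i))" using K0 by simp
  then have allm: "\<forall>i<n. lpnorm (ereal p0) n (A i) = m" using prod_eq_max[OF rowc[OF A(1)]] by blast
  show "\<forall>i<n. \<forall>j<n. \<bar>A i j\<bar> = real n powr (- 1 / p)"
  proof (intro allI impI)
    fix i j assume i: "i < n" and j: "j < n"
    have S: "(\<Sum>k<n. \<bar>A i k\<bar> powr p) = 1" using A i p0 pp lpnorm_fin_one by auto
    have "(\<Sum>k<n. \<bar>A i k\<bar> powr p0) powr (1/p0) = real n powr (1/p0 - 1/p)"
      using allm i by (simp add: lpnorm_def m_def)
    then show "\<bar>A i j\<bar> = real n powr (- 1 / p)"
      using power_mean_row(2)[OF p0(1) pp assms S] j by blast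
  qed
  qed
  ultimately show "U n (ereal p) = fact n / real n powr (real n / p) \<and>
         (\<forall>A. (\<forall>i<n. lpnorm (ereal p) n (A i) = 1) \<and> per n A = fact n / real n powr (real n / p) \<longrightarrow>
              (\<forall>i<n. \<forall>j<n. \<bar>A i j\<bar> = real n powr (- 1 / p)))" by blast
qed


end
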